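(* Let $H$ be an abelian subgroup of $\operatorname{Sym}_n$. Let $w_1,w_2,w_{1,1},w_{1,2},w_{1,3},w_{1,1}',w_{1,2}',w_{1,3}',w_{2,2},w_{2,1}',w_{2,2}',w_{2,3}'\in \mathrm{FM}_n$ be such that $$w_1=w_{1,1}w_{1,2}w_{1,3}=w_{1,1}'w_{1,2}'w_{1,3}',\qquad w_2=w_{1,1}'w_{2,2}w_{1,3}'=w_{2,1}'w_{2,2}'w_{2,3}',$$ and $\pi(w_{1,2})=\pi(w_{1,2}')=\pi(w_{2,2})=\pi(w_{2,2}')=z$. (i) If $w_{1,2}$ and $w_{1,2}'$ overlap in $w_1$, $w_{2,2}$ and $w_{2,2}'$ overlap in $w_2$, $|w_{1,3}|,|w_{2,3}'|<|w_{1,3}'|$ and $H_n=\{\mathrm{id}\}$, then $w_1=w_2$. (ii) If $w_{1,2}$ and $w_{1,2}'$ overlap in $w_1$, $w_{2,2}$ and $w_{2,2}'$ overlap in $w_2$, $|w_{1,1}|,|w_{2,1}'|<|w_{1,1}'|$ and $H_1=\{\mathrm{id}\}$, then $w_1=w_2$.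
   Context: $S=S_n(H)$ is the monoid with presentation $\langle a_1,\dots,a_n \mid a_1\cdots a_n = a_{\sigma(1)}\cdots a_{\sigma(n)},\ \sigma\in H\rangle$, and $z=a_1a_2\cdots a_n\in S$. $\mathrm{FM}_n=\langle x_1,\dots,x_n\rangle$ is the free monoid of rank $n$ and $\pi:\mathrm{FM}_n\to S$ is the monoid morphism with $\pi(x_i)=a_i$. $|w|$ is the length of a word $w$. $H_i=\{\sigma\in H\mid\sigma(i)=i\}$. Overlap: if $w=x_{i_1}\cdots x_{i_m}$ and $u=x_{i_p}\cdots x_{i_{p+r}}$, $v=x_{i_q}\cdots x_{i_{q+s}}$ are subwords at the indicated positions (here the positions are those determined by the given factorizations, e.g. $w_{1,2}$ occupies the positions after $w_{1,1}$ in $w_1$), then $u$ and $v$ overlap in $w$ if $p\leq q\leq p+r$ or $q\leq p\leq q+s$. *)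

theory Defs
  imports "HOL-Algebra.Sym_Groups"
begin

text \<open>Words in the free monoid FM_n: lists over the alphabet {1..n}; letter i stands for x_i.\<close>
definition FM :: "nat \<Rightarrow> nat list set" where
  "FM n = {w. set w \<subseteq> {1..n}}"

definition zword :: "nat \<Rightarrow> nat list" where
  "zword n = [1..<n+1]"

definition rel_step :: "nat \<Rightarrow> (nat \<Rightarrow> nat) set \<Rightarrow> nat list \<Rightarrow> nat list \<Rightarrow> bool" where
  "rel_step n H u v \<longleftrightarrow>
     (\<exists>a b \<sigma>. \<sigma> \<in> H \<and> u = a @ zword n @ b \<and> v = a @ map \<sigma> (zword n) @ b)"

text \<open>Equality in S_n(H) of the images: pi u = pi v (the monoid congruence generated by the relations).\<close>
definition S_eq :: "nat \<Rightarrow> (nat \<Rightarrow> nat) set \<Rightarrow> nat list \<Rightarrow> nat list \<Rightarrow> bool" where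
  "S_eq n H = equivclp (rel_step n H)"

text \<open>Subwords starting at (0-based) positions p and q, of lengths lu and lv, overlap.\<close>
definition overlap :: "nat \<Rightarrow> nat \<Rightarrow> nat \<Rightarrow> nat \<Rightarrow> bool" where
  "overlap p lu q lv \<longleftrightarrow> (p \<le> q \<and> q < p + lu) \<or> (q \<le> p \<and> p < q + lv)"

end

theory Submission
  imports Defs
begin

lemma zlen[simp]: "length (zword n) = n" by (simp add: zword_def)

lemma class_z:
  assumes sub: "subgroup H (sym_group n)" and "S_eq n H w (zword n)"
  shows "\<exists>s\<in>H. w = map s (zword n)"
proof -
  have idH: "id \<in> H" using subgroup.one_closed[OF sub] by (simp add: sym_group_one)
  have "(symclp (rel_step n H))\<^sup>*\<^sup>* (zword n) w"
    using equivclp_sym[OF assms(2)[unfolded S_eq_def]] by (simp add: equivclp_def)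
  then show ?thesis
  proof (induction rule: rtranclp_induct)
    case base then show ?case using idH by (intro bexI[of _ id]) auto
  next
    case (step y x)
    then obtain s where s: "s \<in> H" "y = map s (zword n)" by blast
    then have ly: "length y = n" by simp
    from step(2) have "rel_step n H y x \<or> rel_step n H x y" by (auto simp: symclp_def)
    then show ?case
    proof
      assume "rel_step n H y x"
      then obtain a b t where t: "t \<in> H" "y = a @ zword n @ b" "x = a @ map t (zword n) @ b"
        unfolding rel_step_def by blast
      then have "a = []" "b = []" using ly by (auto dest: arg_cong[of _ _ length])
      then show ?thesis using t by auto
    next
      assume "rel_step n H x y"
      then obtain a b t where t: "t \<in> H" "x = a @ zword n @ b" "y = a @ map t (zword n) @ b"
        unfolding rel_step_def by blast
      then have "a = []" "b = []" using ly by (auto dest: arg_cong[of _ _ length])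
      then show ?thesis using t idH by (intro bexI[of _ id]) auto
    qed
  qed
qed

lemma grp:
  assumes sub: "subgroup H (sym_group n)" and s: "s \<in> H"
  shows "inv' s \<in> H" "s \<circ> inv' s = id" "inv' s \<circ> s = id" "s permutes {1..n}"
proof -
  have c: "s \<in> carrier (sym_group n)" using subgroup.subset[OF sub] s by blast
  then show p: "s permutes {1..n}" by (simp add: sym_group_carrier)
  show "inv' s \<in> H" using subgroup.m_inv_closed[OF sub s] c by simp
  show "s \<circ> inv' s = id" "inv' s \<circ> s = id" using permutes_inv_o[OF p] by auto
qed

lemma grp_comp:
  assumes sub: "subgroup H (sym_group n)" and "s \<in> H" "t \<in> H"
  shows "s \<circ> t \<in> H"
  using subgroup.m_closed[OF sub assms(2,3)] by (simp add: sym_group_mult)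

lemma fix_id:
  assumes sub: "subgroup H (sym_group n)" and triv: "{\<sigma> \<in> H. \<sigma> k = k} = {id}"
    and t: "t \<in> H" and r: "r \<in> H" and eq: "t k = r k"
  shows "t = r"
proof -
  have b: "inv' r \<circ> t \<in> H" using grp_comp[OF sub grp(1)[OF sub r] t] .
  have "(inv' r \<circ> t) k = k" using eq fun_cong[OF grp(3)[OF sub r]] by simp
  then have "inv' r \<circ> t = id" using b triv by blast
  then have "r \<circ> (inv' r \<circ> t) = r" by simp
  then show ?thesis using grp(2)[OF sub r] by (simp add: o_assoc)
qed

lemma core1:
  assumes sub: "subgroup H (sym_group n)"
    and ab: "\<forall>\<sigma>\<in>H. \<forall>\<tau>\<in>H. \<sigma> \<circ> \<tau> = \<tau> \<circ> \<sigma>"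
    and triv: "{\<sigma> \<in> H. \<sigma> n = n} = {id}"
    and H: "s \<in> H" "t \<in> H" "r \<in> H" "m \<in> H"
    and de: "0 < d" "d \<le> e" "e < n"
    and A: "\<forall>i. 1 \<le> i \<longrightarrow> i \<le> n - d \<longrightarrow> t (d + i) = s i"
    and B: "\<forall>i. 1 \<le> i \<longrightarrow> i \<le> n - e \<longrightarrow> r (e + i) = m i"
    and C: "s n = m (n - e + d)"
  shows "t = r"
proof -
  define g where "g = inv' s \<circ> t"
  have gH: "g \<in> H" unfolding g_def using grp_comp[OF sub grp(1)[OF sub H(1)] H(2)] .
  have si: "\<And>x. inv' s (s x) = x" using fun_cong[OF grp(3)[OF sub H(1)]] by simp
  have g: "g (d + i) = i" if "1 \<le> i" "i \<le> n - d" for i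
    using A that si by (simp add: g_def)
  have comm: "\<And>a b x. a \<in> H \<Longrightarrow> b \<in> H \<Longrightarrow> a (b x) = b (a x)"
    using ab by (metis comp_apply)
  have gn: "g n = n - d" using g[of "n - d"] de by simp
  have g2: "g (n - e + d) = n - e" using g[of "n - e"] de by (simp add: add.commute)
  have "t n = s (n - d)" using A[rule_format, of "n - d"] de by simp
  also have "\<dots> = s (g n)" using gn by simp
  also have "\<dots> = g (s n)" using comm[OF H(1) gH] .
  also have "\<dots> = g (m (n - e + d))" using C by simp
  also have "\<dots> = m (g (n - e + d))" using comm[OF gH H(4)] .
  also have "\<dots> = m (n - e)" using g2 by simp
  also have "\<dots> = r n" using B[rule_format, of "n - e"] de by simp
  finally show ?thesis using fix_id[OF sub triv H(2,3)] by blast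
qed

lemma core2:
  assumes sub: "subgroup H (sym_group n)"
    and ab: "\<forall>\<sigma>\<in>H. \<forall>\<tau>\<in>H. \<sigma> \<circ> \<tau> = \<tau> \<circ> \<sigma>"
    and triv: "{\<sigma> \<in> H. \<sigma> 1 = 1} = {id}"
    and H: "s \<in> H" "t \<in> H" "r \<in> H" "m \<in> H"
    and de: "0 < d" "d \<le> e" "e < n"
    and A: "\<forall>i. 1 \<le> i \<longrightarrow> i \<le> n - d \<longrightarrow> t i = s (d + i)"
    and B: "\<forall>i. 1 \<le> i \<longrightarrow> i \<le> n - e \<longrightarrow> r i = m (e + i)"
    and C: "s 1 = m (e - d + 1)"
  shows "t = r"
proof -
  define g where "g = inv' s \<circ> t"
  have gH: "g \<in> H" unfolding g_def using grp_comp[OF sub grp(1)[OF sub H(1)] H(2)] .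
  have si: "\<And>x. inv' s (s x) = x" using fun_cong[OF grp(3)[OF sub H(1)]] by simp
  have g: "g i = d + i" if "1 \<le> i" "i \<le> n - d" for i
    using A that si by (simp add: g_def)
  have comm: "\<And>a b x. a \<in> H \<Longrightarrow> b \<in> H \<Longrightarrow> a (b x) = b (a x)"
    using ab by (metis comp_apply)
  have g1: "g 1 = d + 1" using g[of 1] de by simp
  have g2: "g (e - d + 1) = e + 1" using g[of "e - d + 1"] de by simp
  have "t 1 = s (d + 1)" using A[rule_format, of 1] de by simp
  also have "\<dots> = s (g 1)" using g1 by simp
  also have "\<dots> = g (s 1)" using comm[OF H(1) gH] .
  also have "\<dots> = g (m (e - d + 1))" using C by simp
  also have "\<dots> = m (g (e - d + 1))" using comm[OF gH H(4)] .
  also have "\<dots> = m (e + 1)" using g2 by simp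
  also have "\<dots> = r 1" using B[rule_format, of 1] de by simp
  finally show ?thesis using fix_id[OF sub triv H(2,3)] by blast
qed

lemma nth_mid:
  assumes "xs = a @ map f (zword n) @ b" "length a = k" "1 \<le> j" "j \<le> n" "idx = k + j - 1"
  shows "f j = xs ! idx"
proof -
  have "xs ! idx = (map f (zword n) @ b) ! (j - 1)"
    using assms nth_append_length_plus[of a "map f (zword n) @ b" "j - 1"] by simp
  also have "\<dots> = map f (zword n) ! (j - 1)" using assms by (intro nth_append_left) simp
  also have "\<dots> = f j" using assms by (simp add: zword_def del: upt_Suc)
  finally show ?thesis by simp
qed

lemma nth_suf:
  assumes "xs = a @ c @ b" "length a + length c = k" "j < length b" "idx = k + j"
  shows "xs ! idx = b ! j"
  using assms nth_append_length_plus[of "a @ c" b j] by simp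

lemma nth_pre:
  assumes "xs = a @ c" "idx < length a"
  shows "xs ! idx = a ! idx"
  using assms by (simp add: nth_append)

theorem lemma2p1:
  fixes n :: nat and H :: "(nat \<Rightarrow> nat) set"
    and w1 w2 w11 w12 w13 w11' w12' w13' w22 w21' w22' w23' :: "nat list"
  assumes n: "n \<ge> 1"
    and H_sub: "subgroup H (sym_group n)"
    and H_ab: "\<forall>\<sigma>\<in>H. \<forall>\<tau>\<in>H. \<sigma> \<circ> \<tau> = \<tau> \<circ> \<sigma>"
    and FM: "w1 \<in> FM n" "w2 \<in> FM n" "w11 \<in> FM n" "w12 \<in> FM n" "w13 \<in> FM n"
      "w11' \<in> FM n" "w12' \<in> FM n" "w13' \<in> FM n" "w22 \<in> FM n"
      "w21' \<in> FM n" "w22' \<in> FM n" "w23' \<in> FM n"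
    and w1: "w1 = w11 @ w12 @ w13" "w1 = w11' @ w12' @ w13'"
    and w2: "w2 = w11' @ w22 @ w13'" "w2 = w21' @ w22' @ w23'"
    and z: "S_eq n H w12 (zword n)" "S_eq n H w12' (zword n)"
      "S_eq n H w22 (zword n)" "S_eq n H w22' (zword n)"
  shows "(overlap (length w11) (length w12) (length w11') (length w12')
            \<and> overlap (length w11') (length w22) (length w21') (length w22')
            \<and> length w13 < length w13' \<and> length w23' < length w13'
            \<and> {\<sigma> \<in> H. \<sigma> n = n} = {id}
          \<longrightarrow> w1 = w2)
       \<and> (overlap (length w11) (length w12) (length w11') (length w12')
            \<and> overlap (length w11') (length w22) (length w21') (length w22')
            \<and> length w11 < length w11' \<and> length w21' < length w11'
            \<and> {\<sigma> \<in> H. \<sigma> 1 = 1} = {id}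
          \<longrightarrow> w1 = w2)"
proof -
  obtain s where s: "s \<in> H" "w12 = map s (zword n)" using class_z[OF H_sub z(1)] by blast
  obtain t where t: "t \<in> H" "w12' = map t (zword n)" using class_z[OF H_sub z(2)] by blast
  obtain r where r: "r \<in> H" "w22 = map r (zword n)" using class_z[OF H_sub z(3)] by blast
  obtain m where m: "m \<in> H" "w22' = map m (zword n)" using class_z[OF H_sub z(4)] by blast
  have W1: "w1 = w11 @ map s (zword n) @ w13" "w1 = w11' @ map t (zword n) @ w13'"
    using w1 s t by auto
  have W2: "w2 = w11' @ map r (zword n) @ w13'" "w2 = w21' @ map m (zword n) @ w23'"
    using w2 r m by auto
  have L1: "length w11 + n + length w13 = length w11' + n + length w13'"
    using W1 by (metis length_append zlen length_map add.assoc)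
  have L2: "length w21' + n + length w23' = length w11' + n + length w13'"
    using W2 by (metis length_append zlen length_map add.assoc)
  have fin: "w1 = w2" if "t = r" using that w1 w2 t r by simp
  have lens: "length w12 = n" "length w12' = n" "length w22 = n" "length w22' = n"
    using s t r m by auto
  show ?thesis
  proof (intro conjI impI)
    assume hyp: "overlap (length w11) (length w12) (length w11') (length w12')
            \<and> overlap (length w11') (length w22) (length w21') (length w22')
            \<and> length w13 < length w13' \<and> length w23' < length w13'
            \<and> {\<sigma> \<in> H. \<sigma> n = n} = {id}"
    define p where "p = length w11"
    define q where "q = length w11'"
    define p' where "p' = length w21'"
    define d where "d = p - q"
    define e where "e = p' - q"
    have pq: "q < p" "p < q + n" using hyp L1 lens unfolding overlap_def p_def q_def by auto
    have pq': "q < p'" "p' < q + n" using hyp L2 lens unfolding overlap_def p'_def q_def by auto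
    have triv: "{\<sigma> \<in> H. \<sigma> n = n} = {id}" using hyp by blast
    have l13: "d \<le> length w13'" "e \<le> length w13'" using L1 L2 pq pq' d_def e_def p_def p'_def q_def by auto
    have A: "\<forall>i. 1 \<le> i \<longrightarrow> i \<le> n - d \<longrightarrow> t (d + i) = s i"
    proof (intro allI impI)
      fix i assume i: "1 \<le> i" "i \<le> n - d"
      have "t (d + i) = w1 ! (p + i - 1)"
        by (rule nth_mid[OF W1(2), where k=q]) (use i pq d_def q_def in auto)
      also have "\<dots> = s i"
        by (rule sym, rule nth_mid[OF W1(1), where k=p]) (use i pq d_def p_def in auto)
      finally show "t (d + i) = s i" .
    qed
    have B: "\<forall>i. 1 \<le> i \<longrightarrow> i \<le> n - e \<longrightarrow> r (e + i) = m i"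
    proof (intro allI impI)
      fix i assume i: "1 \<le> i" "i \<le> n - e"
      have "r (e + i) = w2 ! (p' + i - 1)"
        by (rule nth_mid[OF W2(1), where k=q]) (use i pq' e_def q_def in auto)
      also have "\<dots> = m i"
        by (rule sym, rule nth_mid[OF W2(2), where k=p']) (use i pq' e_def p'_def in auto)
      finally show "r (e + i) = m i" .
    qed
    have mn: "m (n - e + j) = w13' ! (j - 1)" if "1 \<le> j" "j \<le> e" for j
    proof -
      have "m (n - e + j) = w2 ! (q + n + (j - 1))"
        by (rule nth_mid[OF W2(2), where k=p']) (use that pq' e_def p'_def in auto)
      also have "\<dots> = w13' ! (j - 1)"
        by (rule nth_suf[OF W2(1), where k="q + n"]) (use l13 that pq' e_def q_def lens in auto)
      finally show ?thesis .
    qed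
    have sn2: "s (n - d + j) = w13' ! (j - 1)" if "1 \<le> j" "j \<le> d" for j
    proof -
      have "s (n - d + j) = w1 ! (q + n + (j - 1))"
        by (rule nth_mid[OF W1(1), where k=p]) (use that pq d_def p_def in auto)
      also have "\<dots> = w13' ! (j - 1)"
        by (rule nth_suf[OF W1(2), where k="q + n"]) (use l13 that pq d_def q_def lens in auto)
      finally show ?thesis .
    qed
    have sn: "s n = w13' ! (d - 1)" using sn2[of d] pq d_def by simp
    have mn2: "m n = w13' ! (e - 1)"
      using mn[of e] pq' e_def by simp
    show "w1 = w2"
    proof (cases "d \<le> e")
      case True
      have "s n = m (n - e + d)" using sn mn[of d] True pq d_def by simp
      then show ?thesis using fin core1[OF H_sub H_ab triv s(1) t(1) r(1) m(1) _ True _ A B] pq pq' d_def e_def by simp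
    next
      case False
      have "m n = s (n - d + e)" using mn2 sn2[of e] False pq' e_def by simp
      then have "r = t" using core1[OF H_sub H_ab triv m(1) r(1) t(1) s(1) _ _ _ B A] False pq pq' d_def e_def by simp
      then show ?thesis using fin by simp
    qed
  next
    assume hyp: "overlap (length w11) (length w12) (length w11') (length w12')
            \<and> overlap (length w11') (length w22) (length w21') (length w22')
            \<and> length w11 < length w11' \<and> length w21' < length w11'
            \<and> {\<sigma> \<in> H. \<sigma> 1 = 1} = {id}"
    define p where "p = length w11"
    define q where "q = length w11'"
    define p' where "p' = length w21'"
    define d where "d = q - p"
    define e where "e = q - p'"
    have pq: "p < q" "q < p + n" using hyp lens unfolding overlap_def p_def q_def by auto
    have pq': "p' < q" "q < p' + n" using hyp lens unfolding overlap_def p'_def q_def by auto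
    have triv: "{\<sigma> \<in> H. \<sigma> 1 = 1} = {id}" using hyp by blast
    have A: "\<forall>i. 1 \<le> i \<longrightarrow> i \<le> n - d \<longrightarrow> t i = s (d + i)"
    proof (intro allI impI)
      fix i assume i: "1 \<le> i" "i \<le> n - d"
      have "t i = w1 ! (q + i - 1)"
        by (rule nth_mid[OF W1(2), where k=q]) (use i pq d_def q_def in auto)
      also have "\<dots> = s (d + i)"
        by (rule sym, rule nth_mid[OF W1(1), where k=p]) (use i pq d_def p_def in auto)
      finally show "t i = s (d + i)" .
    qed
    have B: "\<forall>i. 1 \<le> i \<longrightarrow> i \<le> n - e \<longrightarrow> r i = m (e + i)"
    proof (intro allI impI)
      fix i assume i: "1 \<le> i" "i \<le> n - e"
      have "r i = w2 ! (q + i - 1)"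
        by (rule nth_mid[OF W2(1), where k=q]) (use i pq' e_def q_def in auto)
      also have "\<dots> = m (e + i)"
        by (rule sym, rule nth_mid[OF W2(2), where k=p']) (use i pq' e_def p'_def in auto)
      finally show "r i = m (e + i)" .
    qed
    have sj: "s j = w11' ! (q - d + j - 1)" if "1 \<le> j" "j \<le> d" for j
    proof -
      have "s j = w1 ! (q - d + j - 1)"
        by (rule nth_mid[OF W1(1), where k=p]) (use that pq d_def p_def in auto)
      also have "\<dots> = w11' ! (q - d + j - 1)"
        by (rule nth_pre[OF w1(2)]) (use that pq d_def q_def in auto)
      finally show ?thesis .
    qed
    have mj: "m j = w11' ! (q - e + j - 1)" if "1 \<le> j" "j \<le> e" for j
    proof -
      have "m j = w2 ! (q - e + j - 1)"
        by (rule nth_mid[OF W2(2), where k=p']) (use that pq' e_def p'_def in auto)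
      also have "\<dots> = w11' ! (q - e + j - 1)"
        by (rule nth_pre[OF w2(1)]) (use that pq' e_def q_def in auto)
      finally show ?thesis .
    qed
    show "w1 = w2"
    proof (cases "d \<le> e")
      case True
      have ix: "q - e + (e - d + 1) - 1 = q - d" using True pq pq' d_def e_def by simp
      have m1: "m (e - d + 1) = w11' ! (q - e + (e - d + 1) - 1)" by (rule mj) (use True pq d_def in auto)
      have s1: "s 1 = w11' ! (q - d + 1 - 1)" by (rule sj) (use True pq d_def in auto)
      have "s 1 = m (e - d + 1)" using m1 s1 ix by simp
      then show ?thesis using fin core2[OF H_sub H_ab triv s(1) t(1) r(1) m(1) _ True _ A B] pq pq' d_def e_def by simp
    next
      case False
      have ix: "q - d + (d - e + 1) - 1 = q - e" using False pq pq' d_def e_def by simp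
      have s1: "s (d - e + 1) = w11' ! (q - d + (d - e + 1) - 1)" by (rule sj) (use False pq' e_def in auto)
      have m1: "m 1 = w11' ! (q - e + 1 - 1)" by (rule mj) (use False pq' e_def in auto)
      have "m 1 = s (d - e + 1)" using m1 s1 ix by simp
      then have "r = t" using core2[OF H_sub H_ab triv m(1) r(1) t(1) s(1) _ _ _ B A] False pq pq' d_def e_def by simp
      then show ?thesis using fin by simp
    qed
  qed
qed

end
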